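(* Let $K$ be an infinite zero-dimensional Hausdorff compact space. Then \[\operatorname{Lip}_0(C(K))\stackrel{c}{\hookrightarrow}\left(\bigoplus_{\operatorname{w}(K)}\operatorname{Lip}_0(c_0)\right)_{\ell_\infty},\] where the right-hand side is the $\ell_\infty$-sum of $\operatorname{w}(K)$ copies of $\operatorname{Lip}_0(c_0)$.
   Context: $C(K)$ is the space of real continuous functions on $K$ with sup norm; $c_0$ is the space of real null sequences with sup norm. $\operatorname{w}(K)$ is the weight of $K$. $\operatorname{Lip}_0(X)$ is the Banach space of real Lipschitz functions on the Banach space $X$ vanishing at $0$, normed by the smallest Lipschitz constant. $\left(\bigoplus_{j\in\varGamma}Z_j\right)_{\ell_\infty}$ is the space of bounded families $(z_j)$ with the sup norm. $X\stackrel{c}{\hookrightarrow}Y$ means $Y$ contains a complemented subspace isomorphic to $X$. *)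

theory Defs
  imports "HOL-Analysis.Analysis" "HOL-Library.Equipollence" "HOL-Library.Function_Algebras"
begin

instantiation "fun" :: (type, real_vector) real_vector
begin
definition scaleR_fun :: "real \<Rightarrow> ('a \<Rightarrow> 'b) \<Rightarrow> 'a \<Rightarrow> 'b" where
  "scaleR_fun c f = (\<lambda>x. c *\<^sub>R f x)"
instance
  by standard (auto simp: scaleR_fun_def fun_eq_iff scaleR_add_right scaleR_add_left)
end

text \<open>Concrete normed spaces are represented by a carrier set V (a linear subspace of a
  real vector space type) together with a norm function N defined on V.\<close>

text \<open>C(K) for a compact Hausdorff space K given as a topological type: all continuous
  real functions (all bounded, since K is compact), with the sup norm.\<close>
definition CK :: "('a::topological_space \<Rightarrow> real) set" where
  "CK = {f. continuous_on UNIV f}"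

definition CK_norm :: "('a::topological_space \<Rightarrow> real) \<Rightarrow> real" where
  "CK_norm f = (SUP x. \<bar>f x\<bar>)"

definition c0 :: "(nat \<Rightarrow> real) set" where
  "c0 = {x. x \<longlonglongrightarrow> 0}"

definition c0_norm :: "(nat \<Rightarrow> real) \<Rightarrow> real" where
  "c0_norm x = (SUP n. \<bar>x n\<bar>)"

text \<open>Lip_0(X): real Lipschitz functions on X vanishing at 0 (taken to be 0 outside the
  carrier, so that the carrier is a genuine vector space of functions), normed by the smallest
  Lipschitz constant.\<close>
definition Lip0 :: "'v::real_vector set \<Rightarrow> ('v \<Rightarrow> real) \<Rightarrow> ('v \<Rightarrow> real) set" where
  "Lip0 V N = {f. f 0 = 0 \<and> (\<forall>x. x \<notin> V \<longrightarrow> f x = 0) \<and>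
      (\<exists>C. \<forall>x\<in>V. \<forall>y\<in>V. \<bar>f x - f y\<bar> \<le> C * N (x - y))}"

definition Lip0_norm :: "'v::real_vector set \<Rightarrow> ('v \<Rightarrow> real) \<Rightarrow> ('v \<Rightarrow> real) \<Rightarrow> real" where
  "Lip0_norm V N f = Inf {C. 0 \<le> C \<and> (\<forall>x\<in>V. \<forall>y\<in>V. \<bar>f x - f y\<bar> \<le> C * N (x - y))}"

definition linf_sum :: "'i set \<Rightarrow> 'v::real_vector set \<Rightarrow> ('v \<Rightarrow> real) \<Rightarrow> ('i \<Rightarrow> 'v) set" where
  "linf_sum \<Gamma> V N = {z. (\<forall>j\<in>\<Gamma>. z j \<in> V) \<and> (\<forall>j. j \<notin> \<Gamma> \<longrightarrow> z j = 0) \<and>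
      bdd_above ((\<lambda>j. N (z j)) ` \<Gamma>)}"

definition linf_norm :: "'i set \<Rightarrow> ('v::real_vector \<Rightarrow> real) \<Rightarrow> ('i \<Rightarrow> 'v) \<Rightarrow> real" where
  "linf_norm \<Gamma> N z = (SUP j\<in>\<Gamma>. N (z j))"

definition bdd_lin_op :: "'v::real_vector set \<Rightarrow> ('v \<Rightarrow> real) \<Rightarrow> 'w::real_vector set \<Rightarrow> ('w \<Rightarrow> real)
    \<Rightarrow> ('v \<Rightarrow> 'w) \<Rightarrow> bool" where
  "bdd_lin_op X NX Y NY T \<longleftrightarrow> (\<forall>x\<in>X. T x \<in> Y) \<and>
     (\<forall>x\<in>X. \<forall>y\<in>X. T (x + y) = T x + T y) \<and> (\<forall>c. \<forall>x\<in>X. T (c *\<^sub>R x) = c *\<^sub>R T x) \<and>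
     (\<exists>C. \<forall>x\<in>X. NY (T x) \<le> C * NX x)"

definition lin_subspace :: "'v::real_vector set \<Rightarrow> 'v set \<Rightarrow> bool" where
  "lin_subspace Z Y \<longleftrightarrow> Z \<subseteq> Y \<and> 0 \<in> Z \<and> (\<forall>x\<in>Z. \<forall>y\<in>Z. x + y \<in> Z) \<and> (\<forall>c. \<forall>x\<in>Z. c *\<^sub>R x \<in> Z)"

definition complemented :: "'w::real_vector set \<Rightarrow> 'w set \<Rightarrow> ('w \<Rightarrow> real) \<Rightarrow> bool" where
  "complemented Z Y NY \<longleftrightarrow> lin_subspace Z Y \<and>
     (\<exists>P. bdd_lin_op Y NY Y NY P \<and> P ` Y = Z \<and> (\<forall>z\<in>Z. P z = z))"

definition isomorphic :: "'v::real_vector set \<Rightarrow> ('v \<Rightarrow> real) \<Rightarrow> 'w::real_vector set \<Rightarrow> ('w \<Rightarrow> real)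
    \<Rightarrow> bool" where
  "isomorphic X NX Z NZ \<longleftrightarrow> (\<exists>T. bij_betw T X Z \<and> bdd_lin_op X NX Z NZ T \<and>
      bdd_lin_op Z NZ X NX (inv_into X T))"

definition comp_embeds :: "'v::real_vector set \<Rightarrow> ('v \<Rightarrow> real) \<Rightarrow> 'w::real_vector set \<Rightarrow> ('w \<Rightarrow> real)
    \<Rightarrow> bool" where
  "comp_embeds X NX Y NY \<longleftrightarrow> (\<exists>Z. complemented Z Y NY \<and> isomorphic X NX Z NY)"

text \<open>\<Gamma> has cardinality w(K), the weight (least cardinality of a base) of the space K = 'a.\<close>
definition has_weight_card :: "'a::topological_space itself \<Rightarrow> 'i set \<Rightarrow> bool" where
  "has_weight_card _ \<Gamma> \<longleftrightarrow> (\<exists>B::'a set set. topological_basis B \<and> B \<approx> \<Gamma>) \<and>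
     (\<forall>B::'a set set. topological_basis B \<longrightarrow> \<Gamma> \<lesssim> B)"

end

theory Submission
  imports Defs
begin


definition ultra :: "'a filter \<Rightarrow> bool" where
  "ultra U \<longleftrightarrow> U \<noteq> bot \<and> (\<forall>P. eventually P U \<or> eventually (\<lambda>x. \<not> P x) U)"

lemma max_filter_ultra:
  assumes "F \<noteq> bot"
  assumes max: "\<And>G. G \<noteq> bot \<Longrightarrow> G \<le> F \<Longrightarrow> F = G"
  shows "ultra F"
  unfolding ultra_def
proof (intro conjI allI assms(1))
  fix P
  show "eventually P F \<or> (\<forall>\<^sub>Fx in F. \<not> P x)"
  proof (rule disjCI)
    assume "\<not> (\<forall>\<^sub>Fx in F. \<not> P x)"
    then have "inf F (principal {x. P x}) \<noteq> bot"
      by (simp add: trivial_limit_def eventually_inf_principal not_eventually)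
    then have F: "F = inf F (principal {x. P x})"
      by (rule max) simp
    show "eventually P F"
      by (subst F) (simp add: eventually_inf_principal)
  qed
qed

lemma ex_ultra:
  fixes F :: "'a filter"
  assumes F: "F \<noteq> bot"
  shows "\<exists>U\<le>F. ultra U"
proof -
  let ?X = "{G. G \<noteq> bot \<and> G \<le> F}"
  let ?R = "{(b, a). a \<noteq> bot \<and> a \<le> b \<and> b \<le> F}"
  have bot_notin_R: "c \<in> Chains ?R \<Longrightarrow> bot \<notin> c" for c
    by (auto simp: Chains_def)
  have [simp]: "Field ?R = ?X"
    by (auto simp: Field_def bot_unique)
  have "\<exists>m\<in>Field ?R. \<forall>a\<in>Field ?R. (m, a) \<in> ?R \<longrightarrow> a = m" (is "\<exists>m\<in>?A. ?B m")
  proof (rule Zorns_po_lemma)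
    show "Partial_order ?R"
      by (auto simp: partial_order_on_def preorder_on_def
          antisym_def refl_on_def trans_def Field_def bot_unique)
    show "\<exists>u\<in>Field ?R. \<forall>a\<in>C. (a, u) \<in> ?R" if C: "C \<in> Chains ?R" for C
    proof (simp, intro exI conjI ballI)
      have Inf_C: "Inf C \<noteq> bot" "Inf C \<le> F" if "C \<noteq> {}"
      proof -
        from C that have "Inf C = bot \<longleftrightarrow> (\<exists>x\<in>C. x = bot)"
          unfolding trivial_limit_def by (intro eventually_Inf_base) (auto simp: Chains_def)
        with C show "Inf C \<noteq> bot"
          by (simp add: bot_notin_R)
        from that obtain x where "x \<in> C" by auto
        with C show "Inf C \<le> F"
          by (auto intro!: Inf_lower2[of x] simp: Chains_def)
      qed
      then have [simp]: "inf F (Inf C) = (if C = {} then F else Inf C)"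
        using C by (auto simp add: inf_absorb2)
      from C show "inf F (Inf C) \<noteq> bot"
        by (simp add: F Inf_C)
      from C show "inf F (Inf C) \<le> F"
        by (simp add: Chains_def Inf_C F)
      with C show "inf F (Inf C) \<le> x" "x \<le> F" if "x \<in> C" for x
        using that  by (auto intro: Inf_lower simp: Chains_def)
    qed
  qed
  then obtain U where U: "U \<in> ?A" "?B U" ..
  show ?thesis
  proof
    from U show "U \<le> F \<and> ultra U"
      by (auto intro!: max_filter_ultra)
  qed
qed

lemma ultra_limit_exists:
  fixes h :: "'a \<Rightarrow> real"
  assumes U: "ultra U" and bd: "eventually (\<lambda>j. \<bar>h j\<bar> \<le> M) U"
  shows "\<exists>L. (h \<longlongrightarrow> L) U"
proof -
  have ne: "filtermap h U \<noteq> bot" using U by (simp add: ultra_def filtermap_bot_iff)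
  have ev: "eventually (\<lambda>x. x \<in> {-M..M}) (filtermap h U)"
    using bd by (auto simp: eventually_filtermap abs_le_iff elim!: eventually_mono)
  obtain L where L: "inf (nhds L) (filtermap h U) \<noteq> bot"
    using compact_filter[THEN iffD1, OF compact_Icc, rule_format, OF ne ev] by blast
  have "(h \<longlongrightarrow> L) U"
    unfolding tendsto_def
  proof (intro allI impI)
    fix S :: "real set" assume S: "open S" "L \<in> S"
    show "eventually (\<lambda>j. h j \<in> S) U"
    proof (rule ccontr)
      assume "\<not> eventually (\<lambda>j. h j \<in> S) U"
      then have "eventually (\<lambda>j. \<not> h j \<in> S) U" using U unfolding ultra_def by blast
      then have e2: "eventually (\<lambda>x. x \<notin> S) (filtermap h U)" by (simp add: eventually_filtermap)
      have e1: "eventually (\<lambda>x. x \<in> S) (nhds L)" using S eventually_nhds by blast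
      have "eventually (\<lambda>x. False) (inf (nhds L) (filtermap h U))"
        unfolding eventually_inf using e1 e2 by blast
      then show False using L by (simp add: trivial_limit_def)
    qed
  qed
  then show ?thesis by blast
qed




lemma abstract_comp_embeds:
  fixes T :: "'v::real_vector \<Rightarrow> 'w::real_vector" and S :: "'w \<Rightarrow> 'v"
  assumes X0: "0 \<in> X"
    and TY: "\<And>x. x \<in> X \<Longrightarrow> T x \<in> Y"
    and Tadd: "\<And>x y. x \<in> X \<Longrightarrow> y \<in> X \<Longrightarrow> T (x + y) = T x + T y"
    and Tsc: "\<And>c x. x \<in> X \<Longrightarrow> T (c *\<^sub>R x) = c *\<^sub>R T x"
    and Tb: "\<And>x. x \<in> X \<Longrightarrow> NY (T x) \<le> NX x"
    and SX: "\<And>y. y \<in> Y \<Longrightarrow> S y \<in> X"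
    and Sadd: "\<And>x y. x \<in> Y \<Longrightarrow> y \<in> Y \<Longrightarrow> S (x + y) = S x + S y"
    and Ssc: "\<And>c x. x \<in> Y \<Longrightarrow> S (c *\<^sub>R x) = c *\<^sub>R S x"
    and Sb: "\<And>y. y \<in> Y \<Longrightarrow> NX (S y) \<le> NY y"
    and ST: "\<And>x. x \<in> X \<Longrightarrow> S (T x) = x"
    and Xadd: "\<And>x y. x \<in> X \<Longrightarrow> y \<in> X \<Longrightarrow> x + y \<in> X"
    and Xsc: "\<And>c x. x \<in> X \<Longrightarrow> c *\<^sub>R x \<in> X"
  shows "comp_embeds X NX Y NY"
proof -
  define Z where "Z = T ` X"
  have T0: "T 0 = 0" using Tsc[OF X0, of 0] by simp
  have injT: "inj_on T X" by (metis ST inj_on_inverseI)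
  have invT: "inv_into X T z = S z" if "z \<in> Z" for z
    using that injT ST unfolding Z_def by auto
  have lin: "lin_subspace Z Y"
    unfolding lin_subspace_def Z_def
  proof (intro conjI ballI allI)
    show "T ` X \<subseteq> Y" using TY by auto
    show "0 \<in> T ` X" using X0 T0 by (metis image_eqI)
    fix x y assume "x \<in> T ` X" "y \<in> T ` X"
    then obtain a b where "a \<in> X" "b \<in> X" "x = T a" "y = T b" by auto
    then show "x + y \<in> T ` X" using Tadd Xadd by (metis image_eqI)
  next
    fix c x assume "x \<in> T ` X" 
    then obtain a where "a \<in> X" "x = T a" by auto
    then show "c *\<^sub>R x \<in> T ` X" using Tsc Xsc by (metis image_eqI)
  qed
  have P: "bdd_lin_op Y NY Y NY (\<lambda>y. T (S y))"
    unfolding bdd_lin_op_def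
    using TY SX Tadd Sadd Tsc Ssc Xadd
    by (auto intro!: exI[of _ 1] order_trans[OF Tb Sb])
  have PY: "(\<lambda>y. T (S y)) ` Y = Z"
  proof
    show "(\<lambda>y. T (S y)) ` Y \<subseteq> Z" using SX Z_def by auto
    show "Z \<subseteq> (\<lambda>y. T (S y)) ` Y" unfolding Z_def using ST TY by (force)
  qed
  have Pid: "\<forall>z\<in>Z. T (S z) = z" unfolding Z_def using ST by auto
  have comp: "complemented Z Y NY"
    unfolding complemented_def using lin P PY Pid by blast
  have iso: "isomorphic X NX Z NY"
    unfolding isomorphic_def
  proof (intro exI conjI)
    show "bij_betw T X Z" using injT Z_def by (simp add: bij_betw_def)
    show "bdd_lin_op X NX Z NY T"
      unfolding bdd_lin_op_def Z_def using Tadd Tsc Tb by (auto intro!: exI[of _ 1])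
    show "bdd_lin_op Z NY X NX (inv_into X T)"
      unfolding bdd_lin_op_def
    proof (intro conjI ballI allI exI[of _ 1])
      fix z assume z: "z \<in> Z"
      then show "inv_into X T z \<in> X" using invT SX lin by (auto simp: lin_subspace_def)
      show "NX (inv_into X T z) \<le> 1 * NY z" using invT[OF z] Sb z lin by (auto simp: lin_subspace_def)
    next
      fix x y assume "x \<in> Z" "y \<in> Z"
      then show "inv_into X T (x + y) = inv_into X T x + inv_into X T y"
        using invT lin Sadd by (auto simp: lin_subspace_def)
    next
      fix c x assume "x \<in> Z"
      then show "inv_into X T (c *\<^sub>R x) = c *\<^sub>R inv_into X T x"
        using invT lin Ssc by (auto simp: lin_subspace_def)
    qed
  qed
  show ?thesis unfolding comp_embeds_def using comp iso by blast
qed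




lemma Lip0_set_ne:
  assumes f: "f \<in> Lip0 V N" and N: "\<And>x y. x \<in> V \<Longrightarrow> y \<in> V \<Longrightarrow> 0 \<le> N (x - y)"
  shows "\<exists>C. 0 \<le> C \<and> (\<forall>x\<in>V. \<forall>y\<in>V. \<bar>f x - f y\<bar> \<le> C * N (x - y))"
proof -
  obtain C where C: "\<forall>x\<in>V. \<forall>y\<in>V. \<bar>f x - f y\<bar> \<le> C * N (x - y)" using f by (auto simp: Lip0_def)
  have "\<forall>x\<in>V. \<forall>y\<in>V. \<bar>f x - f y\<bar> \<le> max C 0 * N (x - y)"
  proof (intro ballI)
    fix x y assume "x \<in> V" "y \<in> V"
    then have "\<bar>f x - f y\<bar> \<le> C * N (x - y)" "0 \<le> N (x - y)" using C N by auto
    then show "\<bar>f x - f y\<bar> \<le> max C 0 * N (x - y)"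
      by (smt (verit) mult_right_mono max.cobounded1)
  qed
  then show ?thesis by (intro exI[of _ "max C 0"]) auto
qed

lemma Lip0_norm_nonneg:
  assumes f: "f \<in> Lip0 V N" and N: "\<And>x y. x \<in> V \<Longrightarrow> y \<in> V \<Longrightarrow> 0 \<le> N (x - y)"
  shows "0 \<le> Lip0_norm V N f"
  unfolding Lip0_norm_def using Lip0_set_ne[OF f N]
  by (intro cInf_greatest) auto

lemma Lip0_norm_le:
  assumes "0 \<le> C" "\<And>x y. x \<in> V \<Longrightarrow> y \<in> V \<Longrightarrow> \<bar>f x - f y\<bar> \<le> C * N (x - y)"
  shows "Lip0_norm V N f \<le> C"
  unfolding Lip0_norm_def using assms
  by (intro cInf_lower) (auto intro!: bdd_belowI[of _ 0])

lemma Lip0_lip: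
  assumes f: "f \<in> Lip0 V N" and N: "\<And>x y. x \<in> V \<Longrightarrow> y \<in> V \<Longrightarrow> 0 \<le> N (x - y)"
    and xy: "x \<in> V" "y \<in> V"
  shows "\<bar>f x - f y\<bar> \<le> Lip0_norm V N f * N (x - y)"
proof -
  let ?S = "{C. 0 \<le> C \<and> (\<forall>x\<in>V. \<forall>y\<in>V. \<bar>f x - f y\<bar> \<le> C * N (x - y))}"
  have ne: "?S \<noteq> {}" using Lip0_set_ne[OF f N] by auto
  show ?thesis
  proof (cases "N (x - y) = 0")
    case True
    obtain C where "C \<in> ?S" using ne by auto
    then have "\<bar>f x - f y\<bar> \<le> C * N (x - y)" using xy by auto
    then show ?thesis using True by simp
  next
    case False
    then have pos: "0 < N (x - y)" using N[OF xy] by auto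
    have "\<bar>f x - f y\<bar> / N (x - y) \<le> Inf ?S"
    proof (rule cInf_greatest[OF ne])
      fix C assume "C \<in> ?S"
      then have "\<bar>f x - f y\<bar> \<le> C * N (x - y)" using xy by auto
      then show "\<bar>f x - f y\<bar> / N (x - y) \<le> C" using pos by (simp add: divide_le_eq)
    qed
    then show ?thesis using pos unfolding Lip0_norm_def by (simp add: divide_le_eq)
  qed
qed




definition valid_part :: "'a::topological_space set list \<Rightarrow> bool" where
  "valid_part p \<longleftrightarrow> distinct p \<and> (\<forall>A\<in>set p. open A \<and> closed A \<and> A \<noteq> {}) \<and>
     (\<forall>A\<in>set p. \<forall>B\<in>set p. A \<noteq> B \<longrightarrow> A \<inter> B = {}) \<and> \<Union>(set p) = UNIV"

definition pt :: "'a set list \<Rightarrow> nat \<Rightarrow> 'a" where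
  "pt p k = (SOME t. t \<in> p!k)"

definition Rp :: "'a set list \<Rightarrow> ('a \<Rightarrow> real) \<Rightarrow> nat \<Rightarrow> real" where
  "Rp p x = (\<lambda>k. if k < length p then x (pt p k) else 0)"

definition Ep :: "'a set list \<Rightarrow> (nat \<Rightarrow> real) \<Rightarrow> 'a \<Rightarrow> real" where
  "Ep p a = (\<lambda>t. \<Sum>k<length p. a k * indicator (p!k) t)"

lemma clopen_nbhd:
  assumes "(euclidean :: 'a::topological_space topology) dim_le 0" "open W" "s \<in> W"
  shows "\<exists>V::'a set. closed V \<and> open V \<and> s \<in> V \<and> V \<subseteq> W"
proof -
  have "neighbourhood_base_of (\<lambda>U. closedin (euclidean::'a topology) U \<and> openin euclidean U) euclidean"
    using assms(1) dimension_le_0_neighbourhood_base_of_clopen by blast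
  then obtain U V where "openin euclidean U" "closedin euclidean V \<and> openin euclidean V" "s \<in> U" "U \<subseteq> V" "V \<subseteq> W"
    using assms(2,3) unfolding neighbourhood_base_of by (metis open_openin)
  then show ?thesis by (metis closed_closedin open_openin subsetD)
qed

lemma disjointify:
  fixes L :: "'a::topological_space set list"
  assumes "\<forall>V\<in>set L. open V \<and> closed V"
  shows "\<exists>p. distinct p \<and> (\<forall>A\<in>set p. open A \<and> closed A \<and> A \<noteq> {} \<and> (\<exists>V\<in>set L. A \<subseteq> V)) \<and>
     (\<forall>A\<in>set p. \<forall>B\<in>set p. A \<noteq> B \<longrightarrow> A \<inter> B = {}) \<and> \<Union>(set p) = \<Union>(set L)"
  using assms
proof (induction L)
  case Nil
  then show ?case by (intro exI[of _ "[]"]) auto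
next
  case (Cons V L)
  then obtain p where p: "distinct p" "\<forall>A\<in>set p. open A \<and> closed A \<and> A \<noteq> {} \<and> (\<exists>V\<in>set L. A \<subseteq> V)"
     "\<forall>A\<in>set p. \<forall>B\<in>set p. A \<noteq> B \<longrightarrow> A \<inter> B = {}" "\<Union>(set p) = \<Union>(set L)" by auto
  define N where "N = V - \<Union>(set L)"
  have Vc: "open V" "closed V" using Cons.prems by auto
  have Lc: "open (\<Union>(set L))" "closed (\<Union>(set L))" using Cons.prems
    by (auto intro!: open_Union closed_Union)
  have Nc: "open N" "closed N" unfolding N_def using Vc Lc by (auto intro: open_Diff closed_Diff)
  show ?case
  proof (cases "N = {}")
    case True
    then have "\<Union>(set p) = \<Union>(set (V # L))" using p(4) unfolding N_def by auto
    then show ?thesis using p by (intro exI[of _ p]) auto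
  next
    case False
    have disj: "N \<inter> A = {}" if "A \<in> set p" for A using that p(4) unfolding N_def by auto
    have notin: "N \<notin> set p" using disj False by auto
    have h1: "distinct (N # p)" using p(1) notin by simp
    have h2: "\<forall>A\<in>set (N # p). open A \<and> closed A \<and> A \<noteq> {} \<and> (\<exists>V'\<in>set (V # L). A \<subseteq> V')"
      using p(2) Nc False unfolding N_def by auto
    have h3: "\<forall>A\<in>set (N # p). \<forall>B\<in>set (N # p). A \<noteq> B \<longrightarrow> A \<inter> B = {}"
    proof (intro ballI impI)
      fix A B assume AB: "A \<in> set (N # p)" "B \<in> set (N # p)" "A \<noteq> B"
      show "A \<inter> B = {}"
      proof (cases "A = N")
        case True then show ?thesis using AB disj by auto
      next
        case False
        then have A: "A \<in> set p" using AB by simp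
        show ?thesis
        proof (cases "B = N")
          case True then show ?thesis using A disj by blast
        next
          case False then show ?thesis using A AB p(3) by simp
        qed
      qed
    qed
    have h4: "\<Union>(set (N # p)) = \<Union>(set (V # L))" using p(4) unfolding N_def by auto
    show ?thesis by (rule exI[of _ "N # p"]) (intro conjI h1 h2 h3 h4)
  qed
qed

lemma valid_part_nth:
  assumes "valid_part p" "k < length p"
  shows "open (p!k)" "closed (p!k)" "p!k \<noteq> {}"
  using assms by (auto simp: valid_part_def)

lemma valid_part_cover:
  assumes "valid_part p"
  shows "\<exists>k<length p. t \<in> p!k"
proof -
  have "t \<in> \<Union>(set p)" using assms by (auto simp: valid_part_def)
  then show ?thesis by (auto simp: in_set_conv_nth)
qed

lemma valid_part_disj:
  assumes "valid_part p" "k < length p" "l < length p" "k \<noteq> l"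
  shows "p!k \<inter> p!l = {}"
proof -
  have "p!k \<noteq> p!l" using assms by (auto simp: valid_part_def nth_eq_iff_index_eq)
  then show ?thesis using assms by (auto simp: valid_part_def)
qed

lemma pt_in:
  assumes "valid_part p" "k < length p"
  shows "pt p k \<in> p!k"
  using valid_part_nth(3)[OF assms] unfolding pt_def by (auto intro: someI_ex)

lemma Ep_eval:
  assumes "valid_part p" "k < length p" "t \<in> p!k"
  shows "Ep p a t = a k"
proof -
  have "Ep p a t = a k * indicator (p!k) t + (\<Sum>l\<in>{..<length p} - {k}. a l * indicator (p!l) t)"
    unfolding Ep_def using assms(2) by (subst sum.remove[of _ k]) auto
  also have "(\<Sum>l\<in>{..<length p} - {k}. a l * indicator (p!l) t) = 0"
  proof (rule sum.neutral, intro ballI)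
    fix l assume "l \<in> {..<length p} - {k}"
    then have "t \<notin> p!l" using valid_part_disj[OF assms(1,2), of l] assms(3) by auto
    then show "a l * indicator (p!l) t = 0" by simp
  qed
  finally show ?thesis using assms(3) by simp
qed

lemma part_exists:
  fixes F :: "('a::topological_space \<Rightarrow> real) set"
  assumes cpt: "compact (UNIV :: 'a set)" and dim: "(euclidean :: 'a topology) dim_le 0"
    and F: "finite F" "\<And>x. x \<in> F \<Longrightarrow> continuous_on UNIV x" and e: "0 < e"
  shows "\<exists>p. valid_part p \<and> (\<forall>x\<in>F. \<forall>k<length p. \<forall>t\<in>p!k. \<bar>x t - x (pt p k)\<bar> \<le> e)"
proof -
  define W where "W s = {t. \<forall>x\<in>F. \<bar>x t - x s\<bar> < e/2}" for s
  have Wo: "open (W s)" for s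
  proof -
    have "W s = (\<Inter>x\<in>F. {t. \<bar>x t - x s\<bar> < e/2})" unfolding W_def by auto
    moreover have "open {t. \<bar>x t - x s\<bar> < e/2}" if "x \<in> F" for x
      using F(2)[OF that] by (intro open_Collect_less continuous_intros) auto
    ultimately show ?thesis using F(1) by (auto intro!: open_INT)
  qed
  have Ws: "s \<in> W s" for s using e unfolding W_def by auto
  have "\<forall>s. \<exists>V. closed V \<and> open V \<and> s \<in> V \<and> V \<subseteq> W s"
    using clopen_nbhd[OF dim Wo Ws] by blast
  then obtain V where V: "\<And>s. closed (V s) \<and> open (V s) \<and> s \<in> V s \<and> V s \<subseteq> W s" by metis
  have o: "\<And>s. s \<in> UNIV \<Longrightarrow> open (V s)" using V by blast
  have c: "UNIV \<subseteq> (\<Union>s\<in>UNIV. V s)" using V by blast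
  obtain D where D: "D \<subseteq> UNIV" "finite D" "UNIV \<subseteq> (\<Union>s\<in>D. V s)"
    by (rule compactE_image[OF cpt o c])
  from finite_list[OF finite_imageI[OF D(2)], of V] obtain L where L: "set L = V ` D" ..
  have Lc: "\<forall>A\<in>set L. open A \<and> closed A"
  proof
    fix A assume "A \<in> set L"
    then obtain s where "A = V s" using L by auto
    then show "open A \<and> closed A" using V[of s] by simp
  qed
  obtain p where p: "distinct p" "\<forall>A\<in>set p. open A \<and> closed A \<and> A \<noteq> {} \<and> (\<exists>V\<in>set L. A \<subseteq> V)"
     "\<forall>A\<in>set p. \<forall>B\<in>set p. A \<noteq> B \<longrightarrow> A \<inter> B = {}" "\<Union>(set p) = \<Union>(set L)"
    using disjointify[OF Lc] by (elim exE conjE) (rule that)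
  have UL: "\<Union>(set L) = UNIV" using L D(3) by auto
  have vp: "valid_part p" unfolding valid_part_def
  proof (intro conjI)
    show "distinct p" by (rule p(1))
    show "\<forall>A\<in>set p. open A \<and> closed A \<and> A \<noteq> {}" using p(2) by auto
    show "\<forall>A\<in>set p. \<forall>B\<in>set p. A \<noteq> B \<longrightarrow> A \<inter> B = {}" by (rule p(3))
    show "\<Union>(set p) = UNIV" using p(4) UL by simp
  qed
  have small: "\<bar>x t - x (pt p k)\<bar> \<le> e" if "x \<in> F" "k < length p" "t \<in> p!k" for x k t
  proof -
    have "p!k \<in> set p" using that by auto
    then have "\<exists>s\<in>D. p!k \<subseteq> V s" using p(2) L by auto
    then obtain s where "s \<in> D" "p!k \<subseteq> V s" by blast
    then have "p!k \<subseteq> W s" using V by blast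
    moreover have "pt p k \<in> p!k" using pt_in[OF vp that(2)] .
    ultimately have "\<bar>x t - x s\<bar> < e/2" "\<bar>x (pt p k) - x s\<bar> < e/2"
      using that unfolding W_def by auto
    then show ?thesis by linarith
  qed
  show ?thesis using vp small by blast
qed




lemma times_self_lepoll:
  assumes "infinite A" shows "A \<times> A \<lesssim> A"
proof -
  have "A \<times> A \<approx> A" using card_of_Times_same_infinite[OF assms] 
    by (simp add: eqpoll_iff_card_of_ordIso)
  then show ?thesis by (rule eqpoll_imp_lepoll)
qed

lemma lists_lepoll_infinite:
  assumes inf: "infinite A" shows "lists A \<lesssim> A"
proof -
  obtain pr where pr: "inj_on pr (A \<times> A)" "pr ` (A \<times> A) \<subseteq> A"
    using times_self_lepoll[OF inf] unfolding lepoll_def by blast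
  obtain a0 where a0: "a0 \<in> A" using inf by (metis finite.emptyI ex_in_conv)
  define enc where "enc l = foldr (\<lambda>x acc. pr (x, acc)) l a0" for l
  have encA: "enc l \<in> A" if "l \<in> lists A" for l
    using that
  proof (induction l)
    case Nil then show ?case using a0 by (simp add: enc_def)
  next
    case (Cons x l)
    then have "(x, enc l) \<in> A \<times> A" by auto
    then show ?case using pr(2) by (auto simp: enc_def)
  qed
  have encinj: "l \<in> lists A \<longrightarrow> (\<forall>m. m \<in> lists A \<longrightarrow> length m = length l \<longrightarrow> enc l = enc m \<longrightarrow> l = m)" for l
  proof (induction l)
    case Nil then show ?case by auto
  next
    case (Cons x l)
    show ?case
    proof (intro allI impI)
      fix m assume xl: "x # l \<in> lists A" and m: "m \<in> lists A" "length m = length (x # l)" "enc (x # l) = enc m"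
      then obtain y m' where ym: "m = y # m'" by (cases m) auto
      have "pr (x, enc l) = pr (y, enc m')" using m(3) ym by (simp add: enc_def)
      moreover have "(x, enc l) \<in> A \<times> A" "(y, enc m') \<in> A \<times> A"
        using xl m(1) ym encA by auto
      ultimately have "x = y" "enc l = enc m'" using pr(1) by (auto simp: inj_on_def)
      then show "x # l = m" using Cons.IH xl m ym by auto
    qed
  qed
  have "lists A \<lesssim> (UNIV :: nat set) \<times> A"
    unfolding lepoll_def
  proof (intro exI conjI)
    show "inj_on (\<lambda>l. (length l, enc l)) (lists A)"
      using encinj by (auto simp: inj_on_def)
    show "(\<lambda>l. (length l, enc l)) ` lists A \<subseteq> UNIV \<times> A" using encA by auto
  qed
  also have "(UNIV :: nat set) \<times> A \<lesssim> A \<times> A"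
    using inf by (intro times_lepoll_mono) (auto simp: infinite_le_lepoll)
  also have "A \<times> A \<lesssim> A" by (rule times_self_lepoll[OF inf])
  finally show ?thesis .
qed

lemma basis_infinite:
  assumes B: "topological_basis (B :: 'a::t2_space set set)" and inf: "infinite (UNIV :: 'a set)"
  shows "infinite B"
proof
  assume fin: "finite B"
  have "{S::'a set. open S} \<subseteq> Union ` Pow B"
  proof
    fix S :: "'a set" assume "S \<in> {S. open S}"
    then obtain B' where "B' \<subseteq> B" "\<Union>B' = S" using B unfolding topological_basis_def by auto
    then show "S \<in> Union ` Pow B" by auto
  qed
  then have finO: "finite {S::'a set. open S}" using fin by (auto intro: finite_subset)
  have "(\<lambda>a. - {a}) ` (UNIV :: 'a set) \<subseteq> {S. open S}" by auto
  then have "finite ((\<lambda>a::'a. - {a}) ` UNIV)" using finO by (auto intro: finite_subset)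
  moreover have "inj (\<lambda>a::'a. - {a})" by (auto simp: inj_def)
  ultimately show False using inf by (simp add: finite_image_iff)
qed

lemma clopen_finite_union:
  fixes A :: "'a::topological_space set"
  assumes cpt: "compact (UNIV :: 'a set)" and B: "topological_basis B"
    and A: "open A" "closed A"
  shows "A \<in> (\<lambda>l. \<Union>(set l)) ` lists B"
proof -
  obtain B' where B': "B' \<subseteq> B" "\<Union>B' = A" using B A(1) unfolding topological_basis_def by auto
  have "compact A" using compact_Int_closed[OF cpt A(2)] by simp
  have Bo: "\<And>b. b \<in> B' \<Longrightarrow> open b" using B' B by (auto simp: topological_basis_def)
  have AB: "A \<subseteq> \<Union>B'" using B' by auto
  obtain B'' where B'': "B'' \<subseteq> B'" "finite B''" "A \<subseteq> \<Union>B''"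
    by (rule compactE[OF \<open>compact A\<close> AB Bo])
  obtain l where l: "set l = B''" using finite_list[OF B''(2)] by blast
  have "\<Union>(set l) = A" using l B'' B' by auto
  moreover have "l \<in> lists B" using l B'' B' by auto
  ultimately show ?thesis by blast
qed




lemma fun_ops:
  fixes x y :: "'a \<Rightarrow> real"
  shows "(x + y) t = x t + y t" "(x - y) t = x t - y t" "(c *\<^sub>R x) t = c * x t" "(0::'a\<Rightarrow>real) t = 0"
  by (simp_all add: plus_fun_def fun_diff_def scaleR_fun_def zero_fun_def)

lemma CK_bounded:
  assumes cpt: "compact (UNIV :: 'a::topological_space set)" and x: "x \<in> (CK :: ('a \<Rightarrow> real) set)"
  shows "\<exists>M. \<forall>t. \<bar>x t\<bar> \<le> M"
proof -
  have "compact (x ` UNIV)" using x cpt unfolding CK_def by (auto intro: compact_continuous_image)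
  then have "bounded (x ` UNIV)" by (rule compact_imp_bounded)
  then show ?thesis by (auto simp: bounded_real)
qed

lemma CK_abs_le:
  assumes cpt: "compact (UNIV :: 'a::topological_space set)" and x: "x \<in> (CK :: ('a \<Rightarrow> real) set)"
  shows "\<bar>x t\<bar> \<le> CK_norm x"
proof -
  obtain M where "\<forall>t. \<bar>x t\<bar> \<le> M" using CK_bounded[OF cpt x] by blast
  then have "bdd_above (range (\<lambda>t. \<bar>x t\<bar>))" by (auto intro: bdd_aboveI2)
  then show ?thesis unfolding CK_norm_def by (rule cSUP_upper[OF UNIV_I])
qed

lemma CK_norm_le:
  assumes "\<And>t. \<bar>(x :: 'a::topological_space \<Rightarrow> real) t\<bar> \<le> M"
  shows "CK_norm x \<le> M"
  unfolding CK_norm_def using assms by (intro cSUP_least) auto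

lemma CK_norm_nonneg:
  assumes cpt: "compact (UNIV :: 'a::topological_space set)" and x: "x \<in> (CK :: ('a \<Rightarrow> real) set)"
  shows "0 \<le> CK_norm x"
  using CK_abs_le[OF cpt x, of undefined] by linarith

lemma CK_ops:
  fixes x y :: "'a::topological_space \<Rightarrow> real"
  assumes "x \<in> CK" "y \<in> CK"
  shows "x + y \<in> CK" "x - y \<in> CK" "c *\<^sub>R x \<in> CK" "(0 :: 'a \<Rightarrow> real) \<in> CK"
  using assms unfolding CK_def
  by (auto simp: plus_fun_def fun_diff_def scaleR_fun_def zero_fun_def intro!: continuous_intros)

lemma c0_bounded:
  assumes x: "x \<in> c0" shows "\<exists>M. \<forall>n. \<bar>x n\<bar> \<le> M"
proof -
  have "bounded (range x)" using x unfolding c0_def by (auto intro: convergent_imp_bounded)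
  then show ?thesis by (auto simp: bounded_real)
qed

lemma c0_abs_le:
  assumes x: "x \<in> c0" shows "\<bar>x n\<bar> \<le> c0_norm x"
proof -
  obtain M where "\<forall>t. \<bar>x t\<bar> \<le> M" using c0_bounded[OF x] by blast
  then have "bdd_above (range (\<lambda>t. \<bar>x t\<bar>))" by (auto intro: bdd_aboveI2)
  then show ?thesis unfolding c0_norm_def by (rule cSUP_upper[OF UNIV_I])
qed

lemma c0_norm_le:
  assumes "\<And>n. \<bar>x n\<bar> \<le> M" shows "c0_norm x \<le> M"
  unfolding c0_norm_def using assms by (intro cSUP_least) auto

lemma c0_norm_nonneg: assumes x: "x \<in> c0" shows "0 \<le> c0_norm x"
  using c0_abs_le[OF x, of 0] by linarith

lemma c0_ops:
  assumes "x \<in> c0" "y \<in> c0"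
  shows "x + y \<in> c0" "x - y \<in> c0" "c *\<^sub>R x \<in> c0" "(0 :: nat \<Rightarrow> real) \<in> c0"
proof -
  have x: "x \<longlonglongrightarrow> 0" and y: "y \<longlonglongrightarrow> 0" using assms by (auto simp: c0_def)
  show "x + y \<in> c0" using tendsto_add[OF x y] by (simp add: c0_def plus_fun_def)
  show "x - y \<in> c0" using tendsto_diff[OF x y] by (simp add: c0_def fun_diff_def)
  show "c *\<^sub>R x \<in> c0" using tendsto_mult_left[OF x, of c] by (simp add: c0_def scaleR_fun_def)
  show "(0 :: nat \<Rightarrow> real) \<in> c0" by (simp add: c0_def zero_fun_def)
qed

lemma Rp_c0: "Rp p x \<in> c0"
proof -
  have "eventually (\<lambda>k. Rp p x k = 0) sequentially"
    unfolding eventually_sequentially Rp_def by (intro exI[of _ "length p"]) auto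
  then have "Rp p x \<longlonglongrightarrow> 0" by (rule tendsto_eventually)
  then show ?thesis by (simp add: c0_def)
qed

lemma Rp_lin: "Rp p (x + y) = Rp p x + Rp p y" "Rp p (x - y) = Rp p x - Rp p y"
  "Rp p (c *\<^sub>R x) = c *\<^sub>R Rp p x" "Rp p 0 = 0"
  by (auto simp: Rp_def fun_eq_iff plus_fun_def fun_diff_def scaleR_fun_def zero_fun_def)

lemma Rp_norm:
  assumes cpt: "compact (UNIV :: 'a::topological_space set)" and x: "x \<in> (CK :: ('a \<Rightarrow> real) set)"
  shows "c0_norm (Rp p x) \<le> CK_norm x"
  by (rule c0_norm_le) (auto simp: Rp_def CK_abs_le[OF cpt x] CK_norm_nonneg[OF cpt x])

lemma indicator_clopen_cont:
  assumes "open (A :: 'a::t2_space set)" "closed A"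
  shows "continuous_on UNIV (indicator A :: 'a \<Rightarrow> real)"
proof -
  have "frontier A = {}" using assms
    by (simp add: frontier_def interior_open closure_closed)
  then show ?thesis by (intro continuous_at_imp_continuous_on) (auto simp: isCont_indicator)
qed

lemma Ep_CK:
  assumes "valid_part (p :: 'a::t2_space set list)"
  shows "Ep p a \<in> CK"
  unfolding CK_def Ep_def
proof (intro CollectI continuous_on_sum continuous_on_mult continuous_on_const)
  fix k assume "k \<in> {..<length p}"
  then show "continuous_on UNIV (indicator (p!k) :: 'a \<Rightarrow> real)"
    using indicator_clopen_cont valid_part_nth[OF assms] by auto
qed

lemma Ep_diff: "Ep p (a - b) = Ep p a - Ep p b"
  unfolding Ep_def fun_diff_def by (simp add: left_diff_distrib sum_subtractf)

lemma Ep_zero: "Ep p 0 = 0"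
  unfolding Ep_def zero_fun_def by simp

lemma Ep_norm:
  assumes vp: "valid_part (p :: 'a::t2_space set list)" and a: "a \<in> c0"
  shows "CK_norm (Ep p a) \<le> c0_norm a"
proof (rule CK_norm_le)
  fix t
  obtain k where k: "k < length p" "t \<in> p!k" using valid_part_cover[OF vp] by blast
  show "\<bar>Ep p a t\<bar> \<le> c0_norm a" using Ep_eval[OF vp k] c0_abs_le[OF a] by simp
qed

lemma EpRp_approx:
  assumes vp: "valid_part (p :: 'a::t2_space set list)"
    and sm: "\<forall>k<length p. \<forall>t\<in>p!k. \<bar>x t - x (pt p k)\<bar> \<le> e"
  shows "CK_norm (Ep p (Rp p x) - x) \<le> e"
proof (rule CK_norm_le)
  fix t
  obtain k where k: "k < length p" "t \<in> p!k" using valid_part_cover[OF vp] by blast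
  have "Ep p (Rp p x) t = x (pt p k)" using Ep_eval[OF vp k] k by (simp add: Rp_def)
  then show "\<bar>(Ep p (Rp p x) - x) t\<bar> \<le> e" using sm k by (simp add: fun_diff_def abs_minus_commute)
qed




locale embctx =
  fixes \<Gamma> :: "'i set" and idx :: "'i \<Rightarrow> 'a::t2_space set list" and U :: "'i filter"
  assumes cpt: "compact (UNIV :: 'a set)"
    and \<Gamma>ne: "\<Gamma> \<noteq> {}"
    and idxv: "\<And>j. valid_part (idx j)"
    and U: "ultra U"
    and U\<Gamma>: "eventually (\<lambda>j. j \<in> \<Gamma>) U"
    and Uapprox: "\<And>x e. x \<in> CK \<Longrightarrow> e > 0 \<Longrightarrow> eventually (\<lambda>j. CK_norm (Ep (idx j) (Rp (idx j) x) - x) \<le> e) U"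
begin

abbreviation "NX \<equiv> Lip0_norm (CK :: ('a \<Rightarrow> real) set) CK_norm"
abbreviation "XX \<equiv> Lip0 (CK :: ('a \<Rightarrow> real) set) CK_norm"
abbreviation "N0 \<equiv> Lip0_norm c0 c0_norm"
abbreviation "L0 \<equiv> Lip0 c0 c0_norm"
abbreviation "YY \<equiv> linf_sum \<Gamma> L0 N0"
abbreviation "NY \<equiv> linf_norm \<Gamma> N0"

definition T :: "(('a \<Rightarrow> real) \<Rightarrow> real) \<Rightarrow> 'i \<Rightarrow> (nat \<Rightarrow> real) \<Rightarrow> real" where
  "T f = (\<lambda>j. if j \<in> \<Gamma> then (\<lambda>a. if a \<in> c0 then f (Ep (idx j) a) else 0) else 0)"

definition S :: "('i \<Rightarrow> (nat \<Rightarrow> real) \<Rightarrow> real) \<Rightarrow> ('a \<Rightarrow> real) \<Rightarrow> real" where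
  "S g = (\<lambda>x. if x \<in> CK then Lim U (\<lambda>j. g j (Rp (idx j) x)) else 0)"

lemma Une: "U \<noteq> bot" using U by (simp add: ultra_def)

lemma CKN: "x \<in> CK \<Longrightarrow> y \<in> CK \<Longrightarrow> 0 \<le> CK_norm (x - (y :: 'a \<Rightarrow> real))"
  using CK_norm_nonneg[OF cpt] CK_ops by blast

lemma c0N: "x \<in> c0 \<Longrightarrow> y \<in> c0 \<Longrightarrow> 0 \<le> c0_norm (x - y)"
  using c0_norm_nonneg c0_ops by blast

lemma XX0: "f \<in> XX \<Longrightarrow> f 0 = 0" by (simp add: Lip0_def)
lemma XXout: "f \<in> XX \<Longrightarrow> x \<notin> CK \<Longrightarrow> f x = 0" by (simp add: Lip0_def)
lemma L00: "h \<in> L0 \<Longrightarrow> h 0 = 0" by (simp add: Lip0_def)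

lemma NX_nonneg: "f \<in> XX \<Longrightarrow> 0 \<le> NX f"
  by (rule Lip0_norm_nonneg) (auto intro: CKN)

lemma XXlip: "f \<in> XX \<Longrightarrow> x \<in> CK \<Longrightarrow> y \<in> CK \<Longrightarrow> \<bar>f x - f y\<bar> \<le> NX f * CK_norm (x - y)"
  by (rule Lip0_lip) (auto intro: CKN)

lemma L0lip: "h \<in> L0 \<Longrightarrow> x \<in> c0 \<Longrightarrow> y \<in> c0 \<Longrightarrow> \<bar>h x - h y\<bar> \<le> N0 h * c0_norm (x - y)"
  by (rule Lip0_lip) (auto intro: c0N)

lemma N0_nonneg: "h \<in> L0 \<Longrightarrow> 0 \<le> N0 h"
  by (rule Lip0_norm_nonneg) (auto intro: c0N)

lemma X0: "(0 :: ('a \<Rightarrow> real) \<Rightarrow> real) \<in> XX"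
  unfolding Lip0_def by (auto simp: zero_fun_def intro!: exI[of _ 0])

lemma Xadd: "f \<in> XX \<Longrightarrow> g \<in> XX \<Longrightarrow> f + g \<in> XX"
proof -
  assume f: "f \<in> XX" and g: "g \<in> XX"
  have "\<forall>x\<in>CK. \<forall>y\<in>CK. \<bar>(f + g) x - (f + g) y\<bar> \<le> (NX f + NX g) * CK_norm (x - y)"
  proof (intro ballI)
    fix x y :: "'a \<Rightarrow> real" assume xy: "x \<in> CK" "y \<in> CK"
    have "\<bar>(f + g) x - (f + g) y\<bar> \<le> \<bar>f x - f y\<bar> + \<bar>g x - g y\<bar>" by (simp add: plus_fun_def)
    also have "\<dots> \<le> NX f * CK_norm (x - y) + NX g * CK_norm (x - y)"
      using XXlip[OF f xy] XXlip[OF g xy] by linarith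
    finally show "\<bar>(f + g) x - (f + g) y\<bar> \<le> (NX f + NX g) * CK_norm (x - y)" by (simp add: algebra_simps)
  qed
  then show ?thesis using f g unfolding Lip0_def by (auto simp: plus_fun_def)
qed

lemma Xsc: "f \<in> XX \<Longrightarrow> c *\<^sub>R f \<in> XX"
proof -
  assume f: "f \<in> XX"
  have "\<forall>x\<in>CK. \<forall>y\<in>CK. \<bar>(c *\<^sub>R f) x - (c *\<^sub>R f) y\<bar> \<le> (\<bar>c\<bar> * NX f) * CK_norm (x - y)"
  proof (intro ballI)
    fix x y :: "'a \<Rightarrow> real" assume xy: "x \<in> CK" "y \<in> CK"
    have "\<bar>(c *\<^sub>R f) x - (c *\<^sub>R f) y\<bar> = \<bar>c\<bar> * \<bar>f x - f y\<bar>"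
      by (simp add: scaleR_fun_def abs_mult[symmetric] right_diff_distrib)
    also have "\<dots> \<le> \<bar>c\<bar> * (NX f * CK_norm (x - y))"
      using XXlip[OF f xy] by (simp add: mult_left_mono)
    finally show "\<bar>(c *\<^sub>R f) x - (c *\<^sub>R f) y\<bar> \<le> (\<bar>c\<bar> * NX f) * CK_norm (x - y)" by (simp add: algebra_simps)
  qed
  then show ?thesis using f unfolding Lip0_def by (auto simp: scaleR_fun_def)
qed

lemma Tcomp_L0:
  assumes f: "f \<in> XX"
  shows "(\<lambda>a. if a \<in> c0 then f (Ep (idx j) a) else 0) \<in> L0"
    and "N0 (\<lambda>a. if a \<in> c0 then f (Ep (idx j) a) else 0) \<le> NX f"
proof -
  let ?h = "\<lambda>a. if a \<in> c0 then f (Ep (idx j) a) else 0"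
  have lip: "\<bar>?h a - ?h b\<bar> \<le> NX f * c0_norm (a - b)" if ab: "a \<in> c0" "b \<in> c0" for a b
  proof -
    have "\<bar>?h a - ?h b\<bar> = \<bar>f (Ep (idx j) a) - f (Ep (idx j) b)\<bar>" using ab by simp
    also have "\<dots> \<le> NX f * CK_norm (Ep (idx j) a - Ep (idx j) b)"
      by (rule XXlip[OF f]) (auto intro: Ep_CK idxv)
    also have "Ep (idx j) a - Ep (idx j) b = Ep (idx j) (a - b)" by (simp add: Ep_diff)
    also have "NX f * CK_norm (Ep (idx j) (a - b)) \<le> NX f * c0_norm (a - b)"
      by (intro mult_left_mono Ep_norm idxv c0_ops ab NX_nonneg f)
    finally show ?thesis .
  qed
  have h0: "?h 0 = 0" using c0_ops(4)[OF c0_ops(4) c0_ops(4)] XX0[OF f] by (simp add: Ep_zero)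
  show "?h \<in> L0" unfolding Lip0_def using lip h0 by auto
  show "N0 ?h \<le> NX f" by (rule Lip0_norm_le) (use lip NX_nonneg[OF f] in auto)
qed

lemma T_Y: "f \<in> XX \<Longrightarrow> T f \<in> YY"
  unfolding linf_sum_def T_def using Tcomp_L0
  by (auto intro!: bdd_aboveI[where M="NX f"])

lemma T_bound: "f \<in> XX \<Longrightarrow> NY (T f) \<le> NX f"
  unfolding linf_norm_def T_def using Tcomp_L0 \<Gamma>ne
  by (auto intro!: cSUP_least)

lemma T_add: "T (f + g) = T f + T g"
  unfolding T_def by (auto simp: fun_eq_iff plus_fun_def)

lemma T_sc: "T (c *\<^sub>R f) = c *\<^sub>R T f"
  unfolding T_def by (auto simp: fun_eq_iff scaleR_fun_def)

lemma Y_comp: "g \<in> YY \<Longrightarrow> j \<in> \<Gamma> \<Longrightarrow> g j \<in> L0"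
  unfolding linf_sum_def by auto

lemma Y_N0_le: "g \<in> YY \<Longrightarrow> j \<in> \<Gamma> \<Longrightarrow> N0 (g j) \<le> NY g"
  unfolding linf_sum_def linf_norm_def by (auto intro!: cSUP_upper)

lemma NY_nonneg: "g \<in> YY \<Longrightarrow> 0 \<le> NY g"
proof -
  assume g: "g \<in> YY"
  obtain j where j: "j \<in> \<Gamma>" using \<Gamma>ne by auto
  show ?thesis using N0_nonneg[OF Y_comp[OF g j]] Y_N0_le[OF g j] by linarith
qed

lemma Y_lip:
  assumes g: "g \<in> YY" and j: "j \<in> \<Gamma>" and xy: "x \<in> CK" "y \<in> CK"
  shows "\<bar>g j (Rp (idx j) x) - g j (Rp (idx j) y)\<bar> \<le> NY g * CK_norm (x - y)"
proof -
  have "\<bar>g j (Rp (idx j) x) - g j (Rp (idx j) y)\<bar> \<le> N0 (g j) * c0_norm (Rp (idx j) x - Rp (idx j) y)"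
    by (rule L0lip[OF Y_comp[OF g j]]) (auto intro: Rp_c0)
  also have "Rp (idx j) x - Rp (idx j) y = Rp (idx j) (x - y)" by (simp add: Rp_lin)
  also have "N0 (g j) * c0_norm (Rp (idx j) (x - y)) \<le> NY g * CK_norm (x - y)"
    by (intro mult_mono Y_N0_le[OF g j] Rp_norm[OF cpt] CK_ops xy NY_nonneg g c0_norm_nonneg Rp_c0)
  finally show ?thesis .
qed

lemma Y_at0: "g \<in> YY \<Longrightarrow> j \<in> \<Gamma> \<Longrightarrow> g j (Rp (idx j) 0) = 0"
  using L00[OF Y_comp] by (simp add: Rp_lin)

lemma S_conv:
  assumes g: "g \<in> YY" and x: "x \<in> CK"
  shows "((\<lambda>j. g j (Rp (idx j) x)) \<longlongrightarrow> S g x) U"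
proof -
  have ev: "eventually (\<lambda>j. \<bar>g j (Rp (idx j) x)\<bar> \<le> NY g * CK_norm x) U"
    using U\<Gamma>
  proof (rule eventually_mono)
    fix j assume j: "j \<in> \<Gamma>"
    have "\<bar>g j (Rp (idx j) x) - g j (Rp (idx j) 0)\<bar> \<le> NY g * CK_norm (x - 0)"
      by (rule Y_lip[OF g j x CK_ops(4)[OF x x]])
    then show "\<bar>g j (Rp (idx j) x)\<bar> \<le> NY g * CK_norm x" using Y_at0[OF g j] by simp
  qed
  obtain L where L: "((\<lambda>j. g j (Rp (idx j) x)) \<longlongrightarrow> L) U"
    using ultra_limit_exists[OF U ev] by blast
  have "S g x = L" unfolding S_def using x tendsto_Lim[OF Une L] by simp
  then show ?thesis using L by simp
qed

lemma S_X: "g \<in> YY \<Longrightarrow> S g \<in> XX"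
  and S_bound: "g \<in> YY \<Longrightarrow> NX (S g) \<le> NY g"
proof -
  assume g: "g \<in> YY"
  have lip: "\<bar>S g x - S g y\<bar> \<le> NY g * CK_norm (x - y)" if xy: "x \<in> CK" "y \<in> CK" for x y
  proof -
    have "((\<lambda>j. \<bar>g j (Rp (idx j) x) - g j (Rp (idx j) y)\<bar>) \<longlongrightarrow> \<bar>S g x - S g y\<bar>) U"
      by (intro tendsto_rabs tendsto_diff S_conv g xy)
    moreover have "eventually (\<lambda>j. \<bar>g j (Rp (idx j) x) - g j (Rp (idx j) y)\<bar> \<le> NY g * CK_norm (x - y)) U"
      using U\<Gamma> by (rule eventually_mono) (rule Y_lip[OF g _ xy])
    ultimately show ?thesis using Une by (intro tendsto_upperbound) auto
  qed
  have z: "(0 :: 'a \<Rightarrow> real) \<in> CK" using CK_ops(4) CK_def by auto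
  have "((\<lambda>j. g j (Rp (idx j) 0)) \<longlongrightarrow> 0) U"
    by (intro tendsto_eventually eventually_mono[OF U\<Gamma>] Y_at0[OF g])
  then have S0: "S g 0 = 0" using tendsto_unique[OF Une S_conv[OF g z]] by simp
  show "S g \<in> XX" unfolding Lip0_def using S0 lip by (auto simp: S_def)
  show "NX (S g) \<le> NY g" by (rule Lip0_norm_le) (use lip NY_nonneg[OF g] in auto)
qed

lemma S_add: "g \<in> YY \<Longrightarrow> h \<in> YY \<Longrightarrow> S (g + h) = S g + S h"
proof (rule ext)
  fix x assume g: "g \<in> YY" and h: "h \<in> YY"
  show "S (g + h) x = (S g + S h) x"
  proof (cases "x \<in> CK")
    case True
    have "((\<lambda>j. (g + h) j (Rp (idx j) x)) \<longlongrightarrow> S g x + S h x) U"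
      using tendsto_add[OF S_conv[OF g True] S_conv[OF h True]] by (simp add: plus_fun_def)
    then show ?thesis using True tendsto_Lim[OF Une] by (simp add: S_def plus_fun_def)
  next
    case False then show ?thesis by (simp add: S_def plus_fun_def)
  qed
qed

lemma S_sc: "g \<in> YY \<Longrightarrow> S (c *\<^sub>R g) = c *\<^sub>R S g"
proof (rule ext)
  fix x assume g: "g \<in> YY"
  show "S (c *\<^sub>R g) x = (c *\<^sub>R S g) x"
  proof (cases "x \<in> CK")
    case True
    have "((\<lambda>j. (c *\<^sub>R g) j (Rp (idx j) x)) \<longlongrightarrow> c * S g x) U"
      using tendsto_mult_left[OF S_conv[OF g True], of c] by (simp add: scaleR_fun_def)
    then show ?thesis using True tendsto_Lim[OF Une] by (simp add: S_def scaleR_fun_def)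
  next
    case False then show ?thesis by (simp add: S_def scaleR_fun_def)
  qed
qed

lemma ST: "f \<in> XX \<Longrightarrow> S (T f) = f"
proof (rule ext)
  fix x assume f: "f \<in> XX"
  show "S (T f) x = f x"
  proof (cases "x \<in> CK")
    case False then show ?thesis using XXout[OF f False] by (simp add: S_def)
  next
    case x: True
    have "((\<lambda>j. T f j (Rp (idx j) x)) \<longlongrightarrow> f x) U"
      unfolding tendsto_iff
    proof (intro allI impI)
      fix e :: real assume e: "0 < e"
      define d where "d = e / (NX f + 1)"
      have Np: "0 \<le> NX f" using NX_nonneg[OF f] .
      have d: "0 < d" unfolding d_def using e Np by simp
      have ev: "eventually (\<lambda>j. j \<in> \<Gamma> \<and> CK_norm (Ep (idx j) (Rp (idx j) x) - x) \<le> d) U"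
        using eventually_conj[OF U\<Gamma> Uapprox[OF x d]] .
      show "eventually (\<lambda>j. dist (T f j (Rp (idx j) x)) (f x) < e) U"
        using ev
      proof (rule eventually_mono)
        fix j assume j: "j \<in> \<Gamma> \<and> CK_norm (Ep (idx j) (Rp (idx j) x) - x) \<le> d"
        have "T f j (Rp (idx j) x) = f (Ep (idx j) (Rp (idx j) x))"
          using j Rp_c0[of "idx j" x] by (simp add: T_def)
        then have "dist (T f j (Rp (idx j) x)) (f x) = \<bar>f (Ep (idx j) (Rp (idx j) x)) - f x\<bar>"
          by (simp add: dist_real_def)
        also have "\<dots> \<le> NX f * CK_norm (Ep (idx j) (Rp (idx j) x) - x)"
          by (rule XXlip[OF f Ep_CK[OF idxv] x])
        also have "\<dots> \<le> NX f * d" using j Np by (simp add: mult_left_mono)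
        also have "\<dots> < e"
        proof -
          have "NX f * d = e * (NX f / (NX f + 1))" unfolding d_def using Np by (simp add: field_simps)
          also have "\<dots> < e * 1" using e Np by (intro mult_strict_left_mono) auto
          finally show ?thesis by simp
        qed
        finally show "dist (T f j (Rp (idx j) x)) (f x) < e" .
      qed
    qed
    then show ?thesis using x tendsto_Lim[OF Une] by (simp add: S_def)
  qed
qed

theorem result: "comp_embeds XX NX YY NY"
  by (rule abstract_comp_embeds[where T=T and S=S])
     (auto intro: X0 T_Y T_add T_sc T_bound S_X S_add S_sc S_bound ST Xadd Xsc)

end

theorem mainTheorem13:
  fixes \<Gamma> :: "'i set"
  assumes "compact (UNIV :: 'a::t2_space set)"
    and "(euclidean :: 'a topology) dim_le 0"
    and "infinite (UNIV :: 'a set)"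
    and "has_weight_card TYPE('a) \<Gamma>"
  shows "comp_embeds (Lip0 (CK :: ('a \<Rightarrow> real) set) CK_norm) (Lip0_norm (CK :: ('a \<Rightarrow> real) set) CK_norm)
           (linf_sum \<Gamma> (Lip0 c0 c0_norm) (Lip0_norm c0 c0_norm))
           (linf_norm \<Gamma> (Lip0_norm c0 c0_norm))"
proof -
  note cpt = assms(1) and dim = assms(2)
  obtain B :: "'a set set" where B: "topological_basis B" "B \<approx> \<Gamma>"
    using assms(4) unfolding has_weight_card_def by blast
  have Binf: "infinite B" by (rule basis_infinite[OF B(1) assms(3)])
  have \<Gamma>inf: "infinite \<Gamma>" using B(2) Binf eqpoll_finite_iff by blast
  then have \<Gamma>ne: "\<Gamma> \<noteq> {}" by auto
  define P where "P = {p :: 'a set list. valid_part p}"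
  have clop: "{A :: 'a set. open A \<and> closed A} \<lesssim> lists B"
    by (rule subset_image_lepoll) (auto intro: clopen_finite_union[OF cpt B(1)])
  have LBinf: "infinite (lists B)"
  proof -
    have "(UNIV :: nat set) \<lesssim> B" using Binf by (simp add: infinite_le_lepoll)
    also have "B \<lesssim> lists B" by (rule lepoll_lists)
    finally show ?thesis by (simp add: infinite_le_lepoll)
  qed
  have "P \<subseteq> lists {A. open A \<and> closed A}" unfolding P_def valid_part_def by auto
  then have "P \<lesssim> lists {A :: 'a set. open A \<and> closed A}" by (rule subset_imp_lepoll)
  also have "\<dots> \<lesssim> lists (lists B)" by (rule lists_lepoll_mono[OF clop])
  also have "\<dots> \<lesssim> lists B" by (rule lists_lepoll_infinite[OF LBinf])
  also have "lists B \<lesssim> B" by (rule lists_lepoll_infinite[OF Binf])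
  also have "B \<lesssim> \<Gamma>" by (rule eqpoll_imp_lepoll[OF B(2)])
  finally have PG: "P \<lesssim> \<Gamma>" .
  obtain g where g: "inj_on g P" "g ` P \<subseteq> \<Gamma>" using PG unfolding lepoll_def by blast
  obtain p0 where p0: "valid_part (p0 :: 'a set list)"
    using part_exists[OF cpt dim, of "{}" 1] by auto
  define idx where "idx j = (if j \<in> g ` P then inv_into P g j else p0)" for j
  have idxv: "valid_part (idx j)" for j
  proof (cases "j \<in> g ` P")
    case True
    then have "inv_into P g j \<in> P" by (rule inv_into_into)
    then show ?thesis using True by (simp add: idx_def P_def)
  next
    case False then show ?thesis using p0 by (simp add: idx_def)
  qed
  have idxg: "idx (g p) = p" if "p \<in> P" for p
    using that g(1) by (simp add: idx_def)
  define D where "D = {(X, e). finite X \<and> X \<subseteq> (CK::('a\<Rightarrow>real) set) \<and> (e::real) > 0}"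
  define Bs where "Bs = (\<lambda>(X,e). {j\<in>\<Gamma>. \<forall>x\<in>X. CK_norm (Ep (idx j) (Rp (idx j) x) - x) \<le> e})"
  define F where "F = (INF d\<in>D. principal (Bs d))"
  have "({}, 1) \<in> D" unfolding D_def by simp
  then have Dne: "D \<noteq> {}" by blast
  have dir: "\<exists>x\<in>D. principal (Bs x) \<le> inf (principal (Bs a)) (principal (Bs b))"
    if "a \<in> D" "b \<in> D" for a b
  proof -
    obtain X1 e1 X2 e2 where ab: "a = (X1, e1)" "b = (X2, e2)" by (cases a, cases b) auto
    have "(X1 \<union> X2, min e1 e2) \<in> D" using that ab by (auto simp: D_def)
    moreover have "Bs (X1 \<union> X2, min e1 e2) \<subseteq> Bs a \<inter> Bs b" unfolding ab Bs_def by auto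
    ultimately show ?thesis by (intro bexI[of _ "(X1 \<union> X2, min e1 e2)"]) (auto simp: inf_principal)
  qed
  have Bsne: "Bs d \<noteq> {}" if "d \<in> D" for d
  proof -
    obtain X e where d: "d = (X, e)" by (cases d) auto
    then have X: "finite X" "X \<subseteq> CK" "e > 0" using that by (auto simp: D_def)
    obtain p where p: "valid_part p" "\<forall>x\<in>X. \<forall>k<length p. \<forall>t\<in>p!k. \<bar>x t - x (pt p k)\<bar> \<le> e"
      using part_exists[OF cpt dim X(1) _ X(3)] X(2) by (auto simp: CK_def)
    have pP: "p \<in> P" using p(1) by (simp add: P_def)
    have "g p \<in> Bs d" unfolding d Bs_def
      using g(2) pP idxg[OF pP] EpRp_approx[OF p(1)] p(2) by auto
    then show ?thesis by auto
  qed
  have Fne: "F \<noteq> bot"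
  proof
    assume "F = bot"
    then have "eventually (\<lambda>_. False) F" by simp
    then obtain d where "d \<in> D" "eventually (\<lambda>_. False) (principal (Bs d))"
      unfolding F_def using eventually_INF_base[OF Dne dir] by blast
    then show False using Bsne by (auto simp: eventually_principal)
  qed
  obtain U where U: "U \<le> F" "ultra U" using ex_ultra[OF Fne] by blast
  have evU: "eventually Q U" if "d \<in> D" "\<forall>j\<in>Bs d. Q j" for d Q
  proof -
    have "eventually Q (principal (Bs d))" using that(2) by (simp add: eventually_principal)
    then have "eventually Q F" unfolding F_def by (rule eventually_INF1[OF that(1)])
    then show ?thesis using U(1) filter_leD by blast
  qed
  have U\<Gamma>: "eventually (\<lambda>j. j \<in> \<Gamma>) U"
    by (rule evU[of "({}, 1)"]) (auto simp: D_def Bs_def)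
  have Uapprox: "eventually (\<lambda>j. CK_norm (Ep (idx j) (Rp (idx j) x) - x) \<le> e) U"
    if "x \<in> CK" "e > 0" for x e
    by (rule evU[of "({x}, e)"]) (use that in \<open>auto simp: D_def Bs_def\<close>)
  interpret embctx \<Gamma> idx U
    by unfold_locales (use cpt \<Gamma>ne idxv U(2) U\<Gamma> Uapprox in auto)
  show ?thesis by (rule result)
qed


end
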